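(* Let $k>l\ge0$ be integers. Then for every pair of positive numbers $C_1<1$ and $C_2>1$ there exists $N\in\mathbb{N}$ such that for all $n\ge N$, $$C_1n^{(k+l)/2}\le\beta^{lk}_n<\beta^{kl}_n\le C_2n^{(k+l)/2}.$$
   Context: For integers $x$ and $s\ge0$, $(x,s)=x(x+1)\cdots(x+s-1)$ ($=1$ if $s=0$), with the convention $(x,s)=0$ whenever $x$ is a negative integer; for integers $n$ and $k,l\ge0$, $\beta^{kl}_n=\sqrt{(n-l+1,l)(n-l+1,k)}$. *)

theory Defs
  imports Complex_Main
begin

definition rpoch :: "int \<Rightarrow> nat \<Rightarrow> int" where
  "rpoch x s = (if x < 0 then 0 else (\<Prod>i<s. x + int i))"

definition beta :: "nat \<Rightarrow> nat \<Rightarrow> int \<Rightarrow> real" where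
  "beta k l n = sqrt (real_of_int (rpoch (n - int l + 1) l * rpoch (n - int l + 1) k))"

end

theory Submission
  imports Defs
begin

definition P :: "int \<Rightarrow> nat \<Rightarrow> int" where "P x s = (\<Prod>i<s. x + int i)"

lemma rpoch_P: "0 \<le> x \<Longrightarrow> rpoch x s = P x s"
  by (simp add: rpoch_def P_def)

lemma P_split: "P x (a + b) = P x a * P (x + int a) b"
  by (induction b) (simp_all add: P_def algebra_simps)

lemma P_Suc: "P x (Suc s) = x * P (x + 1) s"
  using P_split[of x 1 s] by (simp add: P_def)

lemma P_pos: "0 < x \<Longrightarrow> 0 < P x s"
  unfolding P_def by (intro prod_pos) auto

lemma P_lower: "0 \<le> x \<Longrightarrow> x ^ s \<le> P x s"
proof -
  assume x: "0 \<le> x"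
  have "(\<Prod>i<s. x) \<le> (\<Prod>i<s. x + int i)"
    by (rule prod_mono) (use x in auto)
  then show ?thesis by (simp add: P_def)
qed

lemma P_upper: "0 \<le> x \<Longrightarrow> P x s \<le> (x + int s) ^ s"
proof -
  assume x: "0 \<le> x"
  have "(\<Prod>i<s. x + int i) \<le> (\<Prod>i<s. x + int s)"
    by (rule prod_mono) (use x in auto)
  then show ?thesis by (simp add: P_def)
qed

lemma P_mono: "0 \<le> x \<Longrightarrow> x \<le> y \<Longrightarrow> P x s \<le> P y s"
  unfolding P_def by (rule prod_mono) auto

lemma P_strict: "0 < x \<Longrightarrow> x < y \<Longrightarrow> 0 < s \<Longrightarrow> P x s < P y s"
proof -
  assume a: "0 < x" "x < y" "0 < s"
  then obtain t where s: "s = Suc t" by (cases s) auto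
  have "P (x+1) t \<le> P (y+1) t" using a by (intro P_mono) auto
  moreover have "0 < P (x+1) t" using a by (intro P_pos) auto
  moreover have "0 < P (y+1) t" using a by (intro P_pos) auto
  ultimately have "x * P (x+1) t \<le> x * P (y+1) t" "x * P (y+1) t < y * P (y+1) t"
    using a by (simp_all add: mult_left_mono mult_strict_right_mono)
  then have "x * P (x+1) t < y * P (y+1) t" by linarith
  then show ?thesis by (simp add: s P_Suc)
qed

theorem lemma2p9:
  fixes k l :: nat and C1 C2 :: real
  assumes "l < k" and "0 < C1" and "C1 < 1" and "1 < C2"
  shows "\<exists>N::nat. \<forall>n::nat. n \<ge> N \<longrightarrow>
           C1 * real n powr ((real k + real l) / 2) \<le> beta l k (int n)
         \<and> beta l k (int n) < beta k l (int n)
         \<and> beta k l (int n) \<le> C2 * real n powr ((real k + real l) / 2)"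
proof -
  define m where "m = k + l"
  have l1: "(\<lambda>n. (1 - real k / real n) ^ m) \<longlonglongrightarrow> (1 - 0) ^ m"
    by (intro tendsto_power tendsto_diff tendsto_const lim_const_over_n)
  have l2: "(\<lambda>n. (1 + (real k + 1) / real n) ^ m) \<longlonglongrightarrow> (1 + 0) ^ m"
    by (intro tendsto_power tendsto_add tendsto_const lim_const_over_n)
  have "C1^2 < 1" using assms by (simp add: power_less_one_iff)
  then have e1: "eventually (\<lambda>n. C1^2 < (1 - real k / real n) ^ m) sequentially"
    using order_tendstoD(1)[OF l1] by simp
  have "1 < C2^2" using assms by (simp add: one_less_power)
  then have e2: "eventually (\<lambda>n. (1 + (real k + 1) / real n) ^ m < C2^2) sequentially"
    using order_tendstoD(2)[OF l2] by simp
  have e3: "eventually (\<lambda>n. n \<ge> k + 1) sequentially" by (rule eventually_ge_at_top)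
  obtain N where N: "\<And>n. n \<ge> N \<Longrightarrow> C1^2 < (1 - real k / real n) ^ m
     \<and> (1 + (real k + 1) / real n) ^ m < C2^2 \<and> n \<ge> k + 1"
    using eventually_conj[OF e1 eventually_conj[OF e2 e3]] unfolding eventually_sequentially
    by blast
  show ?thesis
  proof (intro exI allI impI)
    fix n :: nat assume "n \<ge> N"
    note Nn0 = N[OF this]
    have nk: "n \<ge> k + 1" using Nn0 by simp
    have npos: "real n > 0" using nk by simp
    have "1 - real k / real n = (real n - real k) / real n"
         "1 + (real k + 1) / real n = (real n + real k + 1) / real n"
      using npos by (simp_all add: field_simps)
    with Nn0 have Nn: "C1^2 < ((real n - real k) / real n) ^ m"
       "((real n + real k + 1) / real n) ^ m < C2^2" by simp_all
    define A where "A = rpoch (int n - int k + 1) k * rpoch (int n - int k + 1) l"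
    define B where "B = rpoch (int n - int l + 1) l * rpoch (int n - int l + 1) k"
    have bl: "beta l k (int n) = sqrt (real_of_int A)" by (simp add: beta_def A_def)
    have bk: "beta k l (int n) = sqrt (real_of_int B)" by (simp add: beta_def B_def)
    have A': "A = P (int n - int k + 1) k * P (int n - int k + 1) l"
      using nk by (simp add: A_def rpoch_P)
    have B': "B = P (int n - int l + 1) l * P (int n - int l + 1) k"
      using nk assms(1) by (simp add: B_def rpoch_P)
    have "(int n - int k + 1) ^ k * (int n - int k + 1) ^ l \<le> A"
      unfolding A' using nk P_pos[of "int n - int k + 1" k]
      by (intro mult_mono P_lower) auto
    then have "(int n - int k) ^ m \<le> A"
      using power_mono[of "int n - int k" "int n - int k + 1" m] nk
      unfolding m_def power_add by simp
    then have Alow: "(real n - real k) ^ m \<le> real_of_int A"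
      by (metis of_int_le_iff of_int_of_nat_eq of_int_power of_int_diff)
    have "B \<le> (int n + 1) ^ l * (int n - int l + 1 + int k) ^ k"
      unfolding B' using nk assms(1)
      apply (intro mult_mono)
      using P_upper[of "int n - int l + 1" l] P_upper[of "int n - int l + 1" k]
        less_imp_le[OF P_pos[of "int n - int l + 1" k]] by auto
    also have "\<dots> \<le> (int n + int k + 1) ^ l * (int n + int k + 1) ^ k"
      using nk assms(1) by (intro mult_mono power_mono) auto
    finally have "B \<le> (int n + int k + 1) ^ m" by (simp add: m_def power_add mult.commute)
    then have "real_of_int B \<le> real_of_int ((int n + int k + 1) ^ m)"
      by (simp only: of_int_le_iff)
    then have Bup: "real_of_int B \<le> (real n + real k + 1) ^ m"
      by simp
    have AB: "A < B"
    proof -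
      have Ak: "P (int n - int k + 1) k = P (int n - int k + 1) (k - l) * P (int n - int l + 1) l"
        using P_split[of "int n - int k + 1" "k - l" l] assms(1) by (simp add: algebra_simps)
      have Bk: "P (int n - int l + 1) k = P (int n - int l + 1) l * P (int n + 1) (k - l)"
        using P_split[of "int n - int l + 1" l "k - l"] assms(1) by (simp add: algebra_simps)
      have p1: "P (int n - int k + 1) (k - l) < P (int n + 1) (k - l)"
        using nk assms(1) by (intro P_strict) auto
      have p2: "P (int n - int k + 1) l \<le> P (int n - int l + 1) l"
        using nk assms(1) by (intro P_mono) auto
      have p3: "0 < P (int n - int k + 1) l" "0 < P (int n - int l + 1) l"
        "0 < P (int n - int k + 1) (k - l)"
        using nk assms(1) by (auto intro: P_pos)
      have "P (int n - int k + 1) (k - l) * P (int n - int k + 1) l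
            < P (int n + 1) (k - l) * P (int n - int l + 1) l"
      proof -
        have "P (int n - int k + 1) (k - l) * P (int n - int k + 1) l
            < P (int n + 1) (k - l) * P (int n - int k + 1) l"
          using p1 p3 by (simp add: mult_strict_right_mono)
        also have "\<dots> \<le> P (int n + 1) (k - l) * P (int n - int l + 1) l"
          using p1 p2 p3 by (simp add: mult_left_mono)
        finally show ?thesis .
      qed
      then have "P (int n - int k + 1) (k - l) * P (int n - int k + 1) l * P (int n - int l + 1) l
            < P (int n + 1) (k - l) * P (int n - int l + 1) l * P (int n - int l + 1) l"
        using p3 by simp
      then show ?thesis unfolding A' B' Ak Bk by (simp add: algebra_simps)
    qed
    have pw: "real n powr ((real k + real l) / 2) = sqrt (real n ^ m)"
    proof -
      have "sqrt (real n ^ m) = (real n ^ m) powr (1/2)"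
        using npos by (simp add: powr_half_sqrt)
      also have "\<dots> = (real n powr (real m)) powr (1/2)"
        using npos by (simp add: powr_realpow)
      also have "\<dots> = real n powr ((real k + real l) / 2)"
        by (simp add: powr_powr m_def)
      finally show ?thesis by simp
    qed
    have c1: "C1 * real n powr ((real k + real l) / 2) = sqrt (C1^2 * real n ^ m)"
      using assms by (simp add: pw real_sqrt_mult)
    have c2: "C2 * real n powr ((real k + real l) / 2) = sqrt (C2^2 * real n ^ m)"
      using assms by (simp add: pw real_sqrt_mult)
    have "C1^2 < (real n - real k) ^ m / real n ^ m"
      using Nn by (simp add: power_divide)
    then have "C1^2 * real n ^ m \<le> (real n - real k) ^ m"
      using npos by (simp add: pos_less_divide_eq)
    then have g1: "C1^2 * real n ^ m \<le> real_of_int A" using Alow by linarith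
    have "(real n + real k + 1) ^ m / real n ^ m < C2^2"
      using Nn by (simp add: power_divide)
    then have "(real n + real k + 1) ^ m \<le> C2^2 * real n ^ m"
      using npos by (simp add: pos_divide_less_eq)
    then have g2: "real_of_int B \<le> C2^2 * real n ^ m" using Bup by linarith
    show "C1 * real n powr ((real k + real l) / 2) \<le> beta l k (int n)
         \<and> beta l k (int n) < beta k l (int n)
         \<and> beta k l (int n) \<le> C2 * real n powr ((real k + real l) / 2)"
      unfolding bl bk c1 c2 using g1 g2 AB by simp
  qed
qed

end
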